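(* Let $G\cong G_1\odot G_2$ be a corona graph where $G_1$ has no isolated vertices, and let $w=(w_0,\dots,w_l)$ with $w_0$ a positive integer and $w_1,\dots,w_l$ nonnegative integers. If $l\ge w_0\ge w_1\ge\cdots\ge w_l$ and $|V(G_2)|\ge w_0$, then $\gamma_w(G)=w_0\gamma(G)$.
   Context: All graphs are finite and simple; $N(v)$ denotes the open neighbourhood of $v$. For a vector $w=(w_0,\dots,w_l)$ of nonnegative integers with $w_0\ge1$, a function $f:V(G)\to\{0,\dots,l\}$ is a $w$-dominating function if $\sum_{u\in N(v)}f(u)\ge w_i$ for every vertex $v$ with $f(v)=i$. The weight is $\omega(f)=\sum_v f(v)$, and $\gamma_w(G)$ is the minimum weight of a $w$-dominating function on $G$. $\gamma(G)$ is the domination number. The corona product $G_1\odot G_2$ is obtained from one copy of $G_1$ and $|V(G_1)|$ copies of $G_2$ by joining every vertex of the $i$-th copy of $G_2$ to the $i$-th vertex of $G_1$. *)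

theory Defs
  imports Main
begin

definition simple_graph :: "'a set \<Rightarrow> ('a \<Rightarrow> 'a \<Rightarrow> bool) \<Rightarrow> bool" where
  "simple_graph V E \<longleftrightarrow> finite V \<and> (\<forall>u v. E u v \<longrightarrow> u \<in> V \<and> v \<in> V)
     \<and> (\<forall>u v. E u v \<longrightarrow> E v u) \<and> (\<forall>v. \<not> E v v)"

definition nbhd :: "'a set \<Rightarrow> ('a \<Rightarrow> 'a \<Rightarrow> bool) \<Rightarrow> 'a \<Rightarrow> 'a set" where
  "nbhd V E v = {u \<in> V. E v u}"

definition no_isolated :: "'a set \<Rightarrow> ('a \<Rightarrow> 'a \<Rightarrow> bool) \<Rightarrow> bool" where
  "no_isolated V E \<longleftrightarrow> (\<forall>v\<in>V. \<exists>u\<in>V. E v u)"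

definition dominating_set :: "'a set \<Rightarrow> ('a \<Rightarrow> 'a \<Rightarrow> bool) \<Rightarrow> 'a set \<Rightarrow> bool" where
  "dominating_set V E D \<longleftrightarrow> D \<subseteq> V \<and> (\<forall>v\<in>V - D. \<exists>u\<in>D. E v u)"

definition domination_number :: "'a set \<Rightarrow> ('a \<Rightarrow> 'a \<Rightarrow> bool) \<Rightarrow> nat" where
  "domination_number V E = Min {card D | D. dominating_set V E D}"

text \<open>The vector w = (w_0,...,w_l) is a list of length l+1; entry i is w ! i.\<close>
definition w_dominating :: "'a set \<Rightarrow> ('a \<Rightarrow> 'a \<Rightarrow> bool) \<Rightarrow> nat list \<Rightarrow> ('a \<Rightarrow> nat) \<Rightarrow> bool" where
  "w_dominating V E w f \<longleftrightarrow>
     (\<forall>v\<in>V. f v \<le> length w - 1) \<and>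
     (\<forall>v\<in>V. sum f (nbhd V E v) \<ge> w ! (f v))"

definition w_domination_number :: "'a set \<Rightarrow> ('a \<Rightarrow> 'a \<Rightarrow> bool) \<Rightarrow> nat list \<Rightarrow> nat" where
  "w_domination_number V E w = Min {sum f V | f. w_dominating V E w f}"

text \<open>Corona product G1 \<odot> G2: vertex Inl v is the v-th vertex of G1,
vertex Inr (v,u) is vertex u in the copy of G2 attached to v.\<close>
definition corona_V :: "'a set \<Rightarrow> 'b set \<Rightarrow> ('a + ('a \<times> 'b)) set" where
  "corona_V V1 V2 = Inl ` V1 \<union> Inr ` (V1 \<times> V2)"

fun corona_E :: "('a \<Rightarrow> 'a \<Rightarrow> bool) \<Rightarrow> 'b set \<Rightarrow> ('b \<Rightarrow> 'b \<Rightarrow> bool)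
    \<Rightarrow> ('a + ('a \<times> 'b)) \<Rightarrow> ('a + ('a \<times> 'b)) \<Rightarrow> bool" where
  "corona_E E1 V2 E2 (Inl x) (Inl y) = E1 x y"
| "corona_E E1 V2 E2 (Inr (x, a)) (Inr (y, b)) = (x = y \<and> E2 a b)"
| "corona_E E1 V2 E2 (Inl x) (Inr (y, b)) = (x = y \<and> b \<in> V2)"
| "corona_E E1 V2 E2 (Inr (y, b)) (Inl x) = (x = y \<and> b \<in> V2)"

end

theory Submission
  imports Defs
begin

lemma corona_E_Inr:
  assumes "corona_E E1 V2 E2 (Inr (v, b)) x"
  shows "x = Inl v \<or> (\<exists>c. x = Inr (v, c))"
  using assms by (cases x) auto

lemma corona_finite:
  assumes "finite V1" "finite V2" shows "finite (corona_V V1 V2)"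
  using assms by (simp add: corona_V_def)

lemma corona_sum:
  assumes "finite V1" "finite V2"
  shows "sum f (corona_V V1 V2) = (\<Sum>v\<in>V1. f (Inl v) + (\<Sum>b\<in>V2. f (Inr (v, b))))"
proof -
  have "sum f (corona_V V1 V2) = sum f (Inl ` V1) + sum f (Inr ` (V1 \<times> V2))"
    unfolding corona_V_def using assms by (intro sum.union_disjoint) auto
  also have "sum f (Inl ` V1) = (\<Sum>v\<in>V1. f (Inl v))"
    by (simp add: sum.reindex)
  also have "sum f (Inr ` (V1 \<times> V2)) = (\<Sum>p\<in>V1 \<times> V2. f (Inr p))"
    by (simp add: sum.reindex)
  also have "\<dots> = (\<Sum>v\<in>V1. \<Sum>b\<in>V2. f (Inr (v, b)))"
    by (simp add: sum.cartesian_product)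
  finally show ?thesis by (simp add: sum.distrib)
qed

theorem theorem7:
  fixes V1 :: "'a set" and E1 :: "'a \<Rightarrow> 'a \<Rightarrow> bool"
    and V2 :: "'b set" and E2 :: "'b \<Rightarrow> 'b \<Rightarrow> bool"
    and w :: "nat list" and l :: nat
  assumes "simple_graph V1 E1" and "simple_graph V2 E2"
    and "no_isolated V1 E1"
    and "length w = l + 1"
    and "w ! 0 \<ge> 1"
    and "l \<ge> w ! 0"
    and "\<forall>i j. i \<le> j \<and> j \<le> l \<longrightarrow> w ! j \<le> w ! i"
    and "card V2 \<ge> w ! 0"
  shows "w_domination_number (corona_V V1 V2) (corona_E E1 V2 E2) w
         = w ! 0 * domination_number (corona_V V1 V2) (corona_E E1 V2 E2)"
proof -
  define V where "V = corona_V V1 V2"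
  define E where "E = corona_E E1 V2 E2"
  have f1: "finite V1" and f2: "finite V2" using assms(1,2) by (auto simp: simple_graph_def)
  have fV: "finite V" unfolding V_def using f1 f2 by (rule corona_finite)
  have V2ne: "V2 \<noteq> {}" using assms(5,8) by auto
  define S where "S v = insert (Inl v) (Inr ` ({v} \<times> V2))" for v :: 'a
  have SV: "S v \<subseteq> V" if "v \<in> V1" for v using that by (auto simp: S_def V_def corona_V_def)
  have fS: "finite (S v)" for v using f2 by (simp add: S_def)
  have sumS: "sum f (S v) = f (Inl v) + (\<Sum>b\<in>V2. f (Inr (v, b)))" for f :: "_ \<Rightarrow> nat" and v
  proof -
    have "sum f (S v) = f (Inl v) + sum f (Inr ` ({v} \<times> V2))"
      unfolding S_def using f2 by (subst sum.insert) auto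
    also have "sum f (Inr ` ({v} \<times> V2)) = (\<Sum>p\<in>{v} \<times> V2. f (Inr p))"
      by (simp add: sum.reindex)
    also have "\<dots> = (\<Sum>b\<in>V2. f (Inr (v, b)))"
      using sum.cartesian_product[of "\<lambda>x b. f (Inr (x, b))" V2 "{v}"] by (simp add: case_prod_beta')
    finally show ?thesis .
  qed
  have nbS: "nbhd V E (Inr (v, b)) \<subseteq> S v" for v b
    unfolding nbhd_def S_def E_def V_def corona_V_def
    by (auto dest: corona_E_Inr)
  have sumV: "sum f V = (\<Sum>v\<in>V1. sum f (S v))" for f :: "_ \<Rightarrow> nat"
    unfolding V_def using corona_sum[OF f1 f2] sumS by simp
  have domlow: "card V1 \<le> card D" if "dominating_set V E D" for D
  proof -
    have DV: "D \<subseteq> V" using that by (simp add: dominating_set_def)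
    have ex: "\<exists>x. x \<in> D \<inter> S v" if v: "v \<in> V1" for v
    proof -
      obtain b where b: "b \<in> V2" using V2ne by auto
      show ?thesis
      proof (cases "Inr (v, b) \<in> D")
        case True then show ?thesis by (auto simp: S_def b)
      next
        case False
        have "Inr (v, b) \<in> V" using v b by (auto simp: V_def corona_V_def)
        with False \<open>dominating_set V E D\<close> obtain u where "u \<in> D" "E (Inr (v, b)) u"
          by (auto simp: dominating_set_def)
        moreover then have "u \<in> nbhd V E (Inr (v, b))" using DV by (auto simp: nbhd_def)
        ultimately show ?thesis using nbS by blast
      qed
    qed
    define g where "g v = (SOME x. x \<in> D \<inter> S v)" for v
    have g: "g v \<in> D \<inter> S v" if "v \<in> V1" for v
      unfolding g_def using someI_ex[OF ex[OF that]] .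
    have "inj_on g V1"
    proof
      fix x y assume "x \<in> V1" "y \<in> V1" "g x = g y"
      then have "g x \<in> S x" "g x \<in> S y" using g[of x] g[of y] by auto
      then show "x = y" by (auto simp: S_def)
    qed
    moreover have "g ` V1 \<subseteq> D" using g by auto
    moreover have "finite D" using DV fV finite_subset by blast
    ultimately show ?thesis by (rule card_inj_on_le)
  qed
  have dom0: "dominating_set V E (Inl ` V1)"
    unfolding dominating_set_def V_def E_def corona_V_def by auto
  have "{card D | D. dominating_set V E D} \<subseteq> {..card V}"
    using fV by (auto simp: dominating_set_def card_mono)
  then have finD: "finite {card D | D. dominating_set V E D}" using finite_subset by blast
  have "domination_number V E = card V1"
    unfolding domination_number_def
  proof (rule Min_eqI[OF finD])
    show "card V1 \<in> {card D | D. dominating_set V E D}"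
      using dom0 card_image[of Inl V1] by (metis (mono_tags, lifting) inj_Inl inj_on_subset subset_UNIV mem_Collect_eq)
  qed (use domlow in auto)
  have wlow: "w ! 0 * card V1 \<le> sum f V" if fw: "w_dominating V E w f" for f
  proof -
    have "w ! 0 \<le> sum f (S v)" if v: "v \<in> V1" for v
    proof (cases "\<exists>b\<in>V2. f (Inr (v, b)) = 0")
      case True
      then obtain b where b: "b \<in> V2" "f (Inr (v, b)) = 0" by auto
      have "Inr (v, b) \<in> V" using v b by (auto simp: V_def corona_V_def)
      then have "w ! 0 \<le> sum f (nbhd V E (Inr (v, b)))"
        using fw b by (auto simp: w_dominating_def)
      also have "\<dots> \<le> sum f (S v)" by (rule sum_mono2[OF fS nbS]) auto
      finally show ?thesis .
    next
      case False
      then have "(\<Sum>b\<in>V2. (1::nat)) \<le> (\<Sum>b\<in>V2. f (Inr (v, b)))"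
        by (intro sum_mono) auto
      then have "card V2 \<le> (\<Sum>b\<in>V2. f (Inr (v, b)))" by simp
      then show ?thesis using assms(8) sumS[of f v] by linarith
    qed
    then have "(\<Sum>v\<in>V1. w ! 0) \<le> (\<Sum>v\<in>V1. sum f (S v))" by (rule sum_mono)
    then show ?thesis using sumV[of f] by (simp add: mult.commute)
  qed
  define f0 where "f0 x = (case x of Inl _ \<Rightarrow> w ! 0 | Inr _ \<Rightarrow> 0)" for x :: "'a + 'a \<times> 'b"
  have f0w: "w_dominating V E w f0"
    unfolding w_dominating_def
  proof (intro conjI ballI)
    fix x assume "x \<in> V"
    show "f0 x \<le> length w - 1" using assms(4,6) by (simp add: f0_def split: sum.split)
  next
    fix x assume x: "x \<in> V"
    show "w ! f0 x \<le> sum f0 (nbhd V E x)"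
    proof (cases x)
      case (Inl v)
      then have v: "v \<in> V1" using x by (auto simp: V_def corona_V_def)
      then obtain u where u: "u \<in> V1" "E1 v u" using assms(3) by (auto simp: no_isolated_def)
      have "Inl u \<in> nbhd V E x" using u Inl by (auto simp: nbhd_def V_def E_def corona_V_def)
      then have "f0 (Inl u) \<le> sum f0 (nbhd V E x)"
        using fV by (intro member_le_sum) (auto simp: nbhd_def)
      moreover have "w ! f0 x \<le> w ! 0" using assms(6,7) Inl by (simp add: f0_def)
      ultimately show ?thesis by (simp add: f0_def)
    next
      case (Inr p)
      then obtain v b where p: "x = Inr (v, b)" "v \<in> V1" "b \<in> V2" using x
        by (auto simp: V_def corona_V_def)
      have "Inl v \<in> nbhd V E x" using p by (auto simp: nbhd_def V_def E_def corona_V_def)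
      then have "f0 (Inl v) \<le> sum f0 (nbhd V E x)"
        using fV by (intro member_le_sum) (auto simp: nbhd_def)
      then show ?thesis using p by (simp add: f0_def)
    qed
  qed
  have sf0: "sum f0 V = w ! 0 * card V1"
    using sumV[of f0] by (simp add: f0_def sumS)
  have "{sum f V | f. w_dominating V E w f} \<subseteq> {..l * card V}"
  proof
    fix s assume "s \<in> {sum f V | f. w_dominating V E w f}"
    then obtain f where f: "s = sum f V" "w_dominating V E w f" by auto
    have "sum f V \<le> (\<Sum>x\<in>V. l)" using f(2) assms(4)
      by (intro sum_mono) (auto simp: w_dominating_def)
    then show "s \<in> {..l * card V}" using f by (simp add: mult.commute)
  qed
  then have finW: "finite {sum f V | f. w_dominating V E w f}" using finite_subset by blast
  have "w_domination_number V E w = w ! 0 * card V1"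
    unfolding w_domination_number_def
  proof (rule Min_eqI[OF finW])
    show "w ! 0 * card V1 \<in> {sum f V | f. w_dominating V E w f}"
      using f0w sf0 by (auto intro!: exI[of _ f0])
  qed (use wlow in auto)
  with \<open>domination_number V E = card V1\<close> show ?thesis by (simp add: V_def E_def)
qed

end
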